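(* Let $(E,\|\cdot\|)$ be an $n$-dimensional normed space over $K$ such that for each subspace $F\subseteq E$ with $\dim E/F=2$ one has $\dim_{K^\vee}(E/F)^\vee=1$. Then all $(n-1)$-dimensional subspaces of $E$ are isometrically isomorphic to each other.
   Context: $K$ is a complete non-archimedean non-trivially valued field which is not spherically complete; $K^\vee$ is a fixed spherically complete immediate extension of $K$. Normed spaces are finite-dimensional non-archimedean normed spaces over $K$; quotients carry the quotient norm $\|\pi(x)\|=\inf_{d\in F}\|x-d\|$. A subset $X\subseteq E\setminus\{0\}$ is orthogonal if $\|\sum\lambda_ix_i\|=\max\|\lambda_ix_i\|$ for finitely many distinct $x_i\in X$, $\lambda_i\in K$; $\dim_{K^\vee}E^\vee$ denotes the cardinality of a maximal orthogonal subset of $E$. *)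

theory Defs
  imports Complex_Main
begin

definition nonarch_abs :: "('k::field \<Rightarrow> real) \<Rightarrow> bool" where
  "nonarch_abs av \<longleftrightarrow>
     (\<forall>x. av x \<ge> 0) \<and> (\<forall>x. av x = 0 \<longleftrightarrow> x = 0) \<and>
     (\<forall>x y. av (x * y) = av x * av y) \<and>
     (\<forall>x y. av (x + y) \<le> max (av x) (av y))"

definition nontrivially_valued :: "('k::field \<Rightarrow> real) \<Rightarrow> bool" where
  "nontrivially_valued av \<longleftrightarrow> (\<exists>x. av x \<noteq> 0 \<and> av x \<noteq> 1)"

definition complete_valued :: "('k::field \<Rightarrow> real) \<Rightarrow> bool" where
  "complete_valued av \<longleftrightarrow>
     (\<forall>s :: nat \<Rightarrow> 'k.
        (\<forall>e>0. \<exists>N. \<forall>m\<ge>N. \<forall>n\<ge>N. av (s m - s n) < e) \<longrightarrow>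
        (\<exists>l. (\<lambda>n. av (s n - l)) \<longlonglongrightarrow> 0))"

definition closed_ball_av :: "('k::field \<Rightarrow> real) \<Rightarrow> 'k \<Rightarrow> real \<Rightarrow> 'k set" where
  "closed_ball_av av a r = {x. av (x - a) \<le> r}"

definition spherically_complete :: "('k::field \<Rightarrow> real) \<Rightarrow> bool" where
  "spherically_complete av \<longleftrightarrow>
     (\<forall>\<C>. \<C> \<noteq> {} \<and> (\<forall>B\<in>\<C>. \<exists>a r. r > 0 \<and> B = closed_ball_av av a r) \<and>
          (\<forall>B1\<in>\<C>. \<forall>B2\<in>\<C>. B1 \<subseteq> B2 \<or> B2 \<subseteq> B1)
          \<longrightarrow> \<Inter>\<C> \<noteq> {})"

text \<open>The space E is the whole type 'v, a vector space over 'k via scale.\<close>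
definition nonarch_norm ::
  "('k::field \<Rightarrow> real) \<Rightarrow> ('k \<Rightarrow> 'v::ab_group_add \<Rightarrow> 'v) \<Rightarrow> ('v \<Rightarrow> real) \<Rightarrow> bool" where
  "nonarch_norm av scale N \<longleftrightarrow>
     (\<forall>x. N x \<ge> 0) \<and> (\<forall>x. N x = 0 \<longleftrightarrow> x = 0) \<and>
     (\<forall>c x. N (scale c x) = av c * N x) \<and>
     (\<forall>x y. N (x + y) \<le> max (N x) (N y))"

definition coset :: "'v::ab_group_add set \<Rightarrow> 'v \<Rightarrow> 'v set" where
  "coset F x = {x + d | d. d \<in> F}"

definition quot :: "'v::ab_group_add set \<Rightarrow> 'v set set" where
  "quot F = range (coset F)"

definition qnorm :: "('v::ab_group_add \<Rightarrow> real) \<Rightarrow> 'v set \<Rightarrow> 'v \<Rightarrow> real" where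
  "qnorm N F x = Inf {N (x - d) | d. d \<in> F}"

text \<open>Linear combinations in E/F are computed from
  arbitrary representatives r C \<in> C.\<close>
definition quot_orthogonal ::
  "('k::field \<Rightarrow> 'v::ab_group_add \<Rightarrow> 'v) \<Rightarrow> ('v \<Rightarrow> real) \<Rightarrow> 'v set \<Rightarrow> 'v set set \<Rightarrow> bool" where
  "quot_orthogonal scale N F X \<longleftrightarrow>
     X \<subseteq> quot F - {F} \<and>
     (\<forall>S lam r. S \<subseteq> X \<and> finite S \<and> S \<noteq> {} \<and> (\<forall>C\<in>S. r C \<in> C) \<longrightarrow>
        qnorm N F (\<Sum>C\<in>S. scale (lam C) (r C)) =
        Max ((\<lambda>C. qnorm N F (scale (lam C) (r C))) ` S))"

definition quot_max_orthogonal ::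
  "('k::field \<Rightarrow> 'v::ab_group_add \<Rightarrow> 'v) \<Rightarrow> ('v \<Rightarrow> real) \<Rightarrow> 'v set \<Rightarrow> 'v set set \<Rightarrow> bool" where
  "quot_max_orthogonal scale N F X \<longleftrightarrow>
     quot_orthogonal scale N F X \<and>
     (\<forall>Y. quot_orthogonal scale N F Y \<and> X \<subseteq> Y \<longrightarrow> Y = X)"

text \<open>dim_{K^\<or>} (E/F)^\<or>: the cardinality of a maximal orthogonal subset of E/F.\<close>
definition dim_vee_quot ::
  "('k::field \<Rightarrow> 'v::ab_group_add \<Rightarrow> 'v) \<Rightarrow> ('v \<Rightarrow> real) \<Rightarrow> 'v set \<Rightarrow> nat" where
  "dim_vee_quot scale N F = card (SOME X. quot_max_orthogonal scale N F X)"

definition isometrically_isomorphic ::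
  "('k::field \<Rightarrow> 'v::ab_group_add \<Rightarrow> 'v) \<Rightarrow> ('v \<Rightarrow> real) \<Rightarrow> 'v set \<Rightarrow> 'v set \<Rightarrow> bool" where
  "isometrically_isomorphic scale N F1 F2 \<longleftrightarrow>
     (\<exists>f. bij_betw f F1 F2 \<and>
          (\<forall>x\<in>F1. \<forall>y\<in>F1. f (x + y) = f x + f y) \<and>
          (\<forall>c. \<forall>x\<in>F1. f (scale c x) = scale c (f x)) \<and>
          (\<forall>x\<in>F1. N (f x) = N x))"

end

theory Submission
  imports Defs
begin


locale nas = vector_space scale for scale :: "'k::field \<Rightarrow> 'v::ab_group_add \<Rightarrow> 'v" +
  fixes av :: "'k \<Rightarrow> real" and N :: "'v \<Rightarrow> real"
  assumes av: "nonarch_abs av" and nn: "nonarch_norm av scale N"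
begin

lemma av_ge0: "av x \<ge> 0" using av unfolding nonarch_abs_def by blast
lemma av_eq0: "av x = 0 \<longleftrightarrow> x = 0" using av unfolding nonarch_abs_def by blast
lemma av_mult: "av (x * y) = av x * av y" using av unfolding nonarch_abs_def by blast
lemma av_pos: "x \<noteq> 0 \<Longrightarrow> av x > 0" using av_ge0 av_eq0 by (metis less_eq_real_def)
lemma av_inv: "x \<noteq> 0 \<Longrightarrow> av (inverse x) * av x = 1"
proof -
  assume "x \<noteq> 0"
  have "av 1 = av 1 * av 1" using av_mult[of 1 1] by simp
  moreover have "av 1 \<noteq> 0" using av_eq0 by simp
  ultimately have "av 1 = 1" by simp
  thus ?thesis using av_mult[of "inverse x" x] \<open>x \<noteq> 0\<close> by simp
qed

lemma N_ge0: "N x \<ge> 0" using nn unfolding nonarch_norm_def by blast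
lemma N_eq0: "N x = 0 \<longleftrightarrow> x = 0" using nn unfolding nonarch_norm_def by blast
lemma N_scale: "N (scale c x) = av c * N x" using nn unfolding nonarch_norm_def by blast
lemma N_add: "N (x + y) \<le> max (N x) (N y)" using nn unfolding nonarch_norm_def by blast

lemma av_m1: "av (-1) = 1"
proof -
  have "av 1 = av 1 * av 1" using av_mult[of 1 1] by simp
  moreover have "av 1 \<noteq> 0" using av_eq0 by simp
  ultimately have a1: "av 1 = 1" by simp
  have "av (-1) * av (-1) = 1" using av_mult[of "-1" "-1"] a1 by simp
  moreover have "av (-1) \<ge> 0" by (rule av_ge0)
  ultimately show ?thesis using square_eq_1_iff[of "av (-1)"] by linarith
qed

lemma N_neg: "N (- x) = N x"
proof -
  have "- x = scale (-1) x" by (simp add: scale_minus_left)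
  thus ?thesis using N_scale[of "-1" x] av_m1 by simp
qed

lemma N_sym: "N (x - y) = N (y - x)"
  using N_neg[of "x - y"] by simp

lemma N_strict: assumes "N x < N y" shows "N (x + y) = N y"
proof -
  have "N (x + y) \<le> N y" using N_add[of x y] assms by simp
  moreover have "N y \<le> max (N (x + y)) (N (- x))" using N_add[of "x + y" "- x"] by simp
  ultimately show ?thesis using assms N_neg[of x] by linarith
qed

definition prof :: "'v set \<Rightarrow> 'v \<Rightarrow> 'v \<Rightarrow> bool" where
  "prof F y z \<longleftrightarrow> (\<forall>d\<in>F. N (y - d) = N (z - d))"

lemma close_prof:
  assumes F: "subspace F" and cl: "\<And>d. d \<in> F \<Longrightarrow> N (c - y) < N (c - d)"
  shows "prof F y c" "y \<notin> F"
proof -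
  show "y \<notin> F" using cl by blast
  show "prof F y c" unfolding prof_def
  proof
    fix d assume "d \<in> F"
    have "N ((y - c) + (c - d)) = N (c - d)" using cl[OF \<open>d \<in> F\<close>] N_sym[of c y] by (intro N_strict) simp
    thus "N (y - d) = N (c - d)" by (simp add: algebra_simps)
  qed
qed

lemma qnorm_bdd: "bdd_below {N (x - d) | d. d \<in> F}"
  by (rule bdd_belowI[of _ 0]) (auto intro: N_ge0)

lemma qnorm_le: "d \<in> F \<Longrightarrow> qnorm N F x \<le> N (x - d)"
  unfolding qnorm_def by (rule cInf_lower) (auto intro: qnorm_bdd)

lemma qnorm_lessD: assumes "0 \<in> F" "qnorm N F x < t" obtains d where "d \<in> F" "N (x - d) < t"
proof -
  have "{N (x - d) | d. d \<in> F} \<noteq> {}" using assms by blast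
  from cInf_lessD[OF this] assms(2) show ?thesis unfolding qnorm_def using that by blast
qed

lemma qnorm_ultra: assumes F: "subspace F"
  shows "qnorm N F (u + v) \<le> max (qnorm N F u) (qnorm N F v)"
proof (rule ccontr)
  assume "\<not> ?thesis"
  hence h: "qnorm N F u < qnorm N F (u + v)" "qnorm N F v < qnorm N F (u + v)" by auto
  have z: "0 \<in> F" using F by (rule subspace_0)
  obtain d1 where d1: "d1 \<in> F" "N (u - d1) < qnorm N F (u + v)" using qnorm_lessD[OF z h(1)] by blast
  obtain d2 where d2: "d2 \<in> F" "N (v - d2) < qnorm N F (u + v)" using qnorm_lessD[OF z h(2)] by blast
  have "d1 + d2 \<in> F" by (rule subspace_add[OF F d1(1) d2(1)])
  hence "qnorm N F (u + v) \<le> N ((u - d1) + (v - d2))" using qnorm_le[of "d1 + d2" F "u+v"] by (simp add: algebra_simps)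
  also have "\<dots> \<le> max (N (u - d1)) (N (v - d2))" by (rule N_add)
  finally show False using d1 d2 by linarith
qed

end

context nas begin

lemma keyA:
  assumes F: "subspace F" and lt: "qnorm N F (scale l1 r1 + scale l2 r2) < qnorm N F (scale l1 r1)"
  and r1: "r1 - c \<in> F" and r2: "r2 - a \<in> F"
  shows "\<exists>y \<in> span (insert a F). prof F y c \<and> y \<notin> F"
proof -
  define u where "u = scale l1 r1"
  define v where "v = scale l2 r2"
  have z: "0 \<in> F" using F by (rule subspace_0)
  obtain e where e: "e \<in> F" "N (u + v - e) < qnorm N F u" using qnorm_lessD[OF z] lt u_def v_def by metis
  have l1: "l1 \<noteq> 0"
  proof
    assume "l1 = 0"
    hence "u = 0" using u_def by simp
    hence "qnorm N F u \<le> 0" using qnorm_le[OF z, of u] N_eq0[of 0] by simp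
    thus False using e(2) N_ge0[of "u + v - e"] by linarith
  qed
  define w where "w = r1 + scale (l2 / l1) r2 - scale (inverse l1) e"
  have uve: "u + v - e = scale l1 w" unfolding w_def u_def v_def using l1
    by (simp add: scale_right_distrib scale_right_diff_distrib)
  define y where "y = c - w"
  have cl: "N (c - y) < N (c - d)" if d: "d \<in> F" for d
  proof -
    define d' where "d' = d + (r1 - c)"
    have d': "d' \<in> F" unfolding d'_def by (rule subspace_add[OF F d r1])
    have "av l1 * N w = N (u + v - e)" using uve N_scale by simp
    also have "\<dots> < qnorm N F u" by (rule e(2))
    also have "\<dots> \<le> N (u - scale l1 d')" using qnorm_le[OF subspace_scale[OF F d', of l1]] .
    also have "u - scale l1 d' = scale l1 (c - d)"
    proof -
      have "r1 - d' = c - d" unfolding d'_def by (simp add: algebra_simps)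
      thus ?thesis unfolding u_def by (metis scale_right_diff_distrib)
    qed
    finally have "av l1 * N w < av l1 * N (c - d)" using N_scale by simp
    hence "N w < N (c - d)" using av_pos[OF l1] by (simp add: mult_less_cancel_left_pos)
    thus ?thesis unfolding y_def by simp
  qed
  have "y \<in> span (insert a F)"
  proof -
    have "r2 \<in> span (insert a F)"
    proof -
      have "r2 = (r2 - a) + a" by simp
      moreover have "r2 - a \<in> span (insert a F)" using r2 by (intro span_base) simp
      moreover have "a \<in> span (insert a F)" by (intro span_base) simp
      ultimately show ?thesis by (metis span_add)
    qed
    moreover have "c - r1 \<in> span (insert a F)"
      using subspace_neg[OF F r1] by (intro span_base) (simp add: algebra_simps)
    moreover have "e \<in> span (insert a F)" using e(1) by (intro span_base) simp
    moreover have "y = (c - r1) - scale (l2 / l1) r2 + scale (inverse l1) e"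
      unfolding y_def w_def by (simp add: diff_diff_eq2 diff_add_eq)
    ultimately show ?thesis using span_add span_diff span_scale by presburger
  qed
  thus ?thesis using close_prof[OF F cl] by blast
qed

lemma transfer:
  assumes F: "subspace F" and p: "prof F y' a" and y': "y' = f + scale k c" and f: "f \<in> F" and k: "k \<noteq> 0"
  shows "prof F (scale (inverse k) (a - f)) c"
  unfolding prof_def
proof
  fix d assume d: "d \<in> F"
  have fd: "f + scale k d \<in> F" by (rule subspace_add[OF F f subspace_scale[OF F d]])
  have "scale (inverse k) (a - f) - d = scale (inverse k) (a - (f + scale k d))"
    using k by (simp add: scale_right_diff_distrib algebra_simps)
  hence "N (scale (inverse k) (a - f) - d) = av (inverse k) * N (a - (f + scale k d))"
    using N_scale by simp
  also have "N (a - (f + scale k d)) = N (y' - (f + scale k d))" using p fd unfolding prof_def by simp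
  also have "y' - (f + scale k d) = scale k (c - d)" using y' by (simp add: scale_right_diff_distrib)
  also have "av (inverse k) * N (scale k (c - d)) = N (c - d)"
    using N_scale av_inv[OF k] by (simp add: mult.assoc[symmetric])
  finally show "N (scale (inverse k) (a - f) - d) = N (c - d)" .
qed

end

context nas begin

lemma coset_mem: "y \<in> coset F x \<longleftrightarrow> y - x \<in> F"
proof
  assume "y \<in> coset F x" then obtain d where "y = x + d" "d \<in> F" unfolding coset_def by blast
  thus "y - x \<in> F" by simp
next
  assume "y - x \<in> F" thus "y \<in> coset F x" unfolding coset_def by (intro CollectI exI[of _ "y - x"]) simp
qed

lemma coset_eq_F: assumes F: "subspace F" shows "coset F x = F \<longleftrightarrow> x \<in> F"
proof
  assume "coset F x = F"
  moreover have "x \<in> coset F x" using coset_mem[of x F x] subspace_0[OF F] by simp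
  ultimately show "x \<in> F" by simp
next
  assume x: "x \<in> F"
  show "coset F x = F"
  proof (rule set_eqI)
    fix y
    have "y - x \<in> F \<longleftrightarrow> y \<in> F"
    proof
      assume "y - x \<in> F"
      from subspace_add[OF F this x] show "y \<in> F" by simp
    next
      assume "y \<in> F"
      from subspace_diff[OF F this x] show "y - x \<in> F" .
    qed
    thus "y \<in> coset F x \<longleftrightarrow> y \<in> F" using coset_mem[of y F x] by simp
  qed
qed

lemma max_orth_exists: "\<exists>X. quot_max_orthogonal scale N F X"
proof -
  let ?A = "{X. quot_orthogonal scale N F X}"
  have "\<exists>M\<in>?A. \<forall>X\<in>?A. M \<subseteq> X \<longrightarrow> X = M"
  proof (rule subset_Zorn')
    fix C assume ch: "subset.chain ?A C"
    show "\<Union>C \<in> ?A"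
      unfolding mem_Collect_eq quot_orthogonal_def
    proof (intro conjI allI impI)
      show "\<Union>C \<subseteq> quot F - {F}" using ch unfolding subset.chain_def quot_orthogonal_def by blast
    next
      fix S lam r
      assume h: "S \<subseteq> \<Union>C \<and> finite S \<and> S \<noteq> {} \<and> (\<forall>C\<in>S. r C \<in> C)"
      have h1: "S \<subseteq> \<Union>C" and h2: "finite S" and h3: "S \<noteq> {}" using h by simp_all
      have ne: "C \<noteq> {}" using h1 h3 by auto
      obtain B where B: "B \<in> C" "S \<subseteq> B" by (rule finite_subset_Union_chain[OF h2 h1 ne ch])
      hence "quot_orthogonal scale N F B" using ch unfolding subset.chain_def by blast
      thus "qnorm N F (\<Sum>C\<in>S. scale (lam C) (r C)) = Max ((\<lambda>C. qnorm N F (scale (lam C) (r C))) ` S)"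
        unfolding quot_orthogonal_def using h B by blast
    qed
  qed
  thus ?thesis unfolding quot_max_orthogonal_def by auto
qed

lemma prof_notin: assumes "prof F y c" "c \<notin> F" shows "y \<notin> F"
proof
  assume "y \<in> F"
  hence "N (y - y) = N (c - y)" using assms unfolding prof_def by blast
  hence "N (c - y) = 0" using N_eq0[of 0] by (metis diff_self)
  hence "c - y = 0" using N_eq0[of "c - y"] by blast
  hence "c = y" by simp
  thus False using assms \<open>y \<in> F\<close> by simp
qed

lemma lemC:
  assumes F: "subspace F" and H: "subspace H" and FH: "F \<subseteq> H" and a: "a \<in> H" "a \<notin> F"
    and mx: "quot_max_orthogonal scale N F {coset F c}" and c: "c \<notin> F"
  shows "\<exists>y\<in>H. y \<notin> F \<and> prof F y c"
proof (cases "coset F a = coset F c")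
  case True
  have "c \<in> coset F c" using coset_mem[of c F c] subspace_0[OF F] by simp
  hence "c - a \<in> F" using True coset_mem[of c F a] by simp
  hence "c \<in> H" using subspace_add[OF H a(1), of "c - a"] FH by auto
  thus ?thesis using c unfolding prof_def by blast
next
  case False
  define C0 where "C0 = coset F c"
  define A where "A = coset F a"
  have AC: "A \<noteq> C0" using False A_def C0_def by simp
  have C0q: "C0 \<in> quot F - {F}" using mx unfolding quot_max_orthogonal_def quot_orthogonal_def C0_def by blast
  have Aq: "A \<in> quot F - {F}" using coset_eq_F[OF F, of a] a unfolding A_def quot_def by auto
  have "\<not> quot_orthogonal scale N F {C0, A}"
  proof
    assume "quot_orthogonal scale N F {C0, A}"
    hence "{C0, A} = {C0}" using mx unfolding quot_max_orthogonal_def C0_def by blast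
    thus False using AC by auto
  qed
  then obtain S lam r where S: "S \<subseteq> {C0, A}" "finite S" "S \<noteq> {}" "\<forall>C\<in>S. r C \<in> C"
    and neq: "qnorm N F (\<Sum>C\<in>S. scale (lam C) (r C)) \<noteq> Max ((\<lambda>C. qnorm N F (scale (lam C) (r C))) ` S)"
    using C0q Aq unfolding quot_orthogonal_def by blast
  have "S = {C0, A}"
  proof -
    have "S \<noteq> {C0}"
    proof
      assume "S = {C0}" thus False using neq by simp
    qed
    moreover have "S \<noteq> {A}"
    proof
      assume "S = {A}" thus False using neq by simp
    qed
    ultimately show ?thesis using S(1,3) by blast
  qed
  define u where "u = scale (lam C0) (r C0)"
  define v where "v = scale (lam A) (r A)"
  have "qnorm N F (u + v) \<noteq> max (qnorm N F u) (qnorm N F v)"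
    using neq \<open>S = {C0, A}\<close> AC unfolding u_def v_def by (simp add: sum.insert)
  hence lt0: "qnorm N F (u + v) < max (qnorm N F u) (qnorm N F v)"
    using qnorm_ultra[OF F, of u v] by linarith
  have vu: "v + u = u + v" by (rule add.commute)
  have rC0: "r C0 \<in> C0" using S(4) \<open>S = {C0, A}\<close> by blast
  have r1: "r C0 - c \<in> F" using rC0 coset_mem[of "r C0" F c] unfolding C0_def by simp
  have rA: "r A \<in> A" using S(4) \<open>S = {C0, A}\<close> by blast
  have r2: "r A - a \<in> F" using rA coset_mem[of "r A" F a] unfolding A_def by simp
  have spanH: "span (insert a F) \<subseteq> H" using a(1) FH by (intro span_minimal[OF _ H]) auto
  show ?thesis
  proof (cases "qnorm N F (u + v) < qnorm N F u")
    case True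
    from keyA[OF F True[unfolded u_def v_def] r1 r2]
    obtain y where "y \<in> span (insert a F)" "prof F y c" "y \<notin> F" by blast
    thus ?thesis using spanH by blast
  next
    case False
    hence lt2: "qnorm N F (v + u) < qnorm N F v" unfolding vu using lt0 by (simp add: less_max_iff_disj)
    from keyA[OF F lt2[unfolded u_def v_def] r2 r1]
    obtain y' where y': "y' \<in> span (insert c F)" "prof F y' a" "y' \<notin> F" by blast
    have spF: "span F = F" using F by simp
    obtain k where k: "y' - scale k c \<in> F" using y'(1) span_breakdown_eq[of y' c F] spF by auto
    define f where "f = y' - scale k c"
    have fF: "f \<in> F" using k f_def by simp
    have k0: "k \<noteq> 0"
    proof
      assume "k = 0" thus False using k y'(3) by simp
    qed
    have p: "prof F (scale (inverse k) (a - f)) c"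
      by (rule transfer[OF F y'(2) _ fF k0]) (simp add: f_def)
    have "a - f \<in> H" using subspace_diff[OF H a(1)] fF FH by blast
    hence "scale (inverse k) (a - f) \<in> H" by (rule subspace_scale[OF H])
    thus ?thesis using p prof_notin[OF p c] by blast
  qed
qed

end

context nas begin

lemma uniq_coef:
  assumes F: "subspace F" and y: "y \<notin> F" and h1: "x - scale k y \<in> F" and h2: "x - scale k' y \<in> F"
  shows "k = k'"
proof (rule ccontr)
  assume ne: "k \<noteq> k'"
  have "(x - scale k' y) - (x - scale k y) \<in> F" by (rule subspace_diff[OF F h2 h1])
  hence "scale (k - k') y \<in> F" by (simp add: scale_left_diff_distrib)
  hence "scale (inverse (k - k')) (scale (k - k') y) \<in> F" by (rule subspace_scale[OF F])
  thus False using ne y by simp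
qed

lemma prof_N:
  assumes F: "subspace F" and p: "prof F y1 y2" and f: "f \<in> F"
  shows "N (f + scale k y2) = N (f + scale k y1)"
proof (cases "k = 0")
  case True thus ?thesis by simp
next
  case False
  define d where "d = - scale (inverse k) f"
  have d: "d \<in> F" unfolding d_def by (rule subspace_neg[OF F subspace_scale[OF F f]])
  have e: "f + scale k y = scale k (y - d)" for y
    unfolding d_def using False by (simp add: scale_right_distrib)
  show ?thesis using p d unfolding e N_scale prof_def by simp
qed

lemma isoD:
  assumes F: "subspace F" and y1: "y1 \<notin> F" and y2: "y2 \<notin> F" and p: "prof F y1 y2"
  shows "isometrically_isomorphic scale N (span (insert y1 F)) (span (insert y2 F))"
proof -
  let ?H1 = "span (insert y1 F)" and ?H2 = "span (insert y2 F)"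
  have spF: "span F = F" using F by simp
  have ex: "\<exists>k. x - scale k y \<in> F" if "x \<in> span (insert y F)" for x y
    using that span_breakdown_eq[of x y F] spF by simp
  define co where "co x = (THE k. x - scale k y1 \<in> F)" for x
  have co: "x - scale (co x) y1 \<in> F" if xH: "x \<in> ?H1" for x
  proof -
    obtain k where k: "x - scale k y1 \<in> F" using ex[OF xH] by blast
    have "co x = k" unfolding co_def by (rule the_equality[where P="\<lambda>k. x - scale k y1 \<in> F", OF k]) (rule uniq_coef[OF F y1 _ k])
    thus ?thesis using k by simp
  qed
  have co_eq: "co x = k" if "x \<in> ?H1" "x - scale k y1 \<in> F" for x k
    using uniq_coef[OF F y1 co[OF that(1)] that(2)] .
  define T where "T x = (x - scale (co x) y1) + scale (co x) y2" for x
  have Hmem: "f + scale k y \<in> span (insert y F)" if "f \<in> F" for f k y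
  proof -
    have "f \<in> span (insert y F)" using that by (intro span_base) simp
    moreover have "scale k y \<in> span (insert y F)" by (intro span_scale span_base) simp
    ultimately show ?thesis by (rule span_add)
  qed
  have H1mem: "f + scale k y1 \<in> ?H1" if "f \<in> F" for f k using Hmem[OF that] .
  have H2mem: "f + scale k y2 \<in> ?H2" if "f \<in> F" for f k using Hmem[OF that] .
  show ?thesis unfolding isometrically_isomorphic_def
  proof (intro exI[of _ T] conjI ballI allI)
    show "bij_betw T ?H1 ?H2"
    proof (rule bij_betw_imageI)
      show "inj_on T ?H1"
      proof (rule inj_onI)
        fix x x' assume x: "x \<in> ?H1" and x': "x' \<in> ?H1" and eq: "T x = T x'"
        have "T x - scale (co x) y2 \<in> F" using co[OF x] unfolding T_def by simp
        moreover have "T x - scale (co x') y2 \<in> F" using co[OF x'] eq unfolding T_def by simp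
        ultimately have kk: "co x = co x'" by (rule uniq_coef[OF F y2])
        show "x = x'" using eq unfolding T_def kk by simp
      qed
    next
      show "T ` ?H1 = ?H2"
      proof
        show "T ` ?H1 \<subseteq> ?H2" unfolding T_def using co H2mem by blast
      next
        show "?H2 \<subseteq> T ` ?H1"
        proof
          fix z assume z: "z \<in> ?H2"
          then obtain k where k: "z - scale k y2 \<in> F" using ex by blast
          define x where "x = (z - scale k y2) + scale k y1"
          have xH: "x \<in> ?H1" unfolding x_def by (rule H1mem[OF k])
          have "co x = k" using co_eq[OF xH] unfolding x_def using k by simp
          hence "T x = z" unfolding T_def x_def by simp
          thus "z \<in> T ` ?H1" using xH by blast
        qed
      qed
    qed
  next
    fix x y assume x: "x \<in> ?H1" and y: "y \<in> ?H1"
    have e: "(x - scale (co x) y1) + (y - scale (co y) y1) = x + y - scale (co x + co y) y1"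
      by (simp add: scale_left_distrib algebra_simps)
    have "co (x + y) = co x + co y"
      by (rule co_eq[OF span_add[OF x y]]) (rule subspace_add[OF F co[OF x] co[OF y], unfolded e])
    thus "T (x + y) = T x + T y" unfolding T_def by (simp add: scale_left_distrib algebra_simps)
  next
    fix c x assume x: "x \<in> ?H1"
    have e: "scale c (x - scale (co x) y1) = scale c x - scale (c * co x) y1"
      by (simp add: scale_right_diff_distrib)
    have "co (scale c x) = c * co x"
      by (rule co_eq[OF span_scale[OF x]]) (rule subspace_scale[OF F co[OF x], of c, unfolded e])
    thus "T (scale c x) = scale c (T x)" unfolding T_def by (simp add: scale_right_distrib scale_right_diff_distrib)
  next
    fix x assume x: "x \<in> ?H1"
    have "N (T x) = N ((x - scale (co x) y1) + scale (co x) y1)"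
      unfolding T_def by (rule prof_N[OF F p co[OF x]])
    thus "N (T x) = N x" by simp
  qed
qed

end


theorem mainTheorem8:
  fixes av :: "'k::field \<Rightarrow> real"
    and scale :: "'k \<Rightarrow> 'v::ab_group_add \<Rightarrow> 'v"
    and N :: "'v \<Rightarrow> real"
    and n :: nat
  assumes K_abs: "nonarch_abs av"
    and K_nontriv: "nontrivially_valued av"
    and K_complete: "complete_valued av"
    and K_not_sph: "\<not> spherically_complete av"
    and E_vs: "vector_space scale"
    and E_findim: "\<exists>B. finite_dimensional_vector_space scale B"
    and E_dim: "vector_space.dim scale UNIV = n"
    and E_norm: "nonarch_norm av scale N"
    and hyp: "\<And>F. module.subspace scale F \<Longrightarrow> vector_space.dim scale F + 2 = n \<Longrightarrow>
                  dim_vee_quot scale N F = 1"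
  shows "\<forall>F1 F2. module.subspace scale F1 \<and> vector_space.dim scale F1 = n - 1 \<and>
                module.subspace scale F2 \<and> vector_space.dim scale F2 = n - 1 \<longrightarrow>
                isometrically_isomorphic scale N F1 F2"
proof -
  have "nas scale av N" unfolding nas_def nas_axioms_def using E_vs K_abs E_norm by simp
  then interpret nas scale av N .
  obtain B where "finite_dimensional_vector_space scale B" using E_findim by blast
  then interpret fd: finite_dimensional_vector_space scale B .
  show ?thesis
  proof (intro allI impI, elim conjE)
    fix H1 H2 assume H1: "subspace H1" and d1: "dim H1 = n - 1"
      and H2: "subspace H2" and d2: "dim H2 = n - 1"
    show "isometrically_isomorphic scale N H1 H2"
    proof (cases "H1 = H2")
      case True
      show ?thesis unfolding isometrically_isomorphic_def True
        by (intro exI[of _ id]) simp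
    next
      case False
      have n21: "\<not> H2 \<subseteq> H1"
      proof
        assume "H2 \<subseteq> H1" hence "H2 = H1" using fd.subspace_dim_equal[OF H2 H1] d1 d2 by simp
        thus False using False by simp
      qed
      have n12: "\<not> H1 \<subseteq> H2"
      proof
        assume "H1 \<subseteq> H2" hence "H1 = H2" using fd.subspace_dim_equal[OF H1 H2] d1 d2 by simp
        thus False using False by simp
      qed
      define S where "S = {x + y |x y. x \<in> H1 \<and> y \<in> H2}"
      have Ssub: "subspace S" unfolding S_def by (rule subspace_sums[OF H1 H2])
      have H1S: "H1 \<subseteq> S" unfolding S_def using subspace_0[OF H2] by force
      obtain z where z: "z \<in> H2" "z \<notin> H1" using n21 by blast
      have "z \<in> S" unfolding S_def using subspace_0[OF H1] z(1) by force
      have e1: "span H1 = H1" using H1 by simp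
      have e2: "span S = S" using Ssub by simp
      have "span H1 \<subset> span S" unfolding e1 e2 using H1S z(2) \<open>z \<in> S\<close> by blast
      hence lt: "dim H1 < dim S" by (rule fd.dim_psubset)
      have "dim S \<le> dim (UNIV :: 'v set)" by (rule fd.dim_subset) simp
      hence le: "dim S \<le> n" using E_dim by simp
      have sums: "dim S + dim (H1 \<inter> H2) = dim H1 + dim H2"
        unfolding S_def by (rule fd.dim_sums_Int[OF H1 H2])
      define F where "F = H1 \<inter> H2"
      have FF: "subspace F" unfolding F_def by (rule subspace_inter[OF H1 H2])
      have dF: "dim F + 2 = n" using lt le sums d1 d2 unfolding F_def by linarith
      have "dim_vee_quot scale N F = 1" using hyp[OF FF dF] .
      hence "card (SOME X. quot_max_orthogonal scale N F X) = 1" unfolding dim_vee_quot_def .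
      moreover have "quot_max_orthogonal scale N F (SOME X. quot_max_orthogonal scale N F X)"
        using max_orth_exists[of F] by (rule someI_ex)
      ultimately obtain C0 where mx: "quot_max_orthogonal scale N F {C0}"
        by (metis card_1_singletonE)
      have "C0 \<in> quot F - {F}" using mx unfolding quot_max_orthogonal_def quot_orthogonal_def by blast
      then obtain c where C0: "C0 = coset F c" and "coset F c \<noteq> F" unfolding quot_def by auto
      hence c: "c \<notin> F" using coset_eq_F[OF FF] by simp
      have mx': "quot_max_orthogonal scale N F {coset F c}" using mx C0 by simp
      have FH1: "F \<subseteq> H1" and FH2: "F \<subseteq> H2" unfolding F_def by auto
      obtain a1 where a1: "a1 \<in> H1" "a1 \<notin> H2" using n12 by blast
      hence a1F: "a1 \<notin> F" unfolding F_def by simp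
      have a2F: "z \<notin> F" using z unfolding F_def by simp
      obtain y1 where y1: "y1 \<in> H1" "y1 \<notin> F" "prof F y1 c" using lemC[OF FF H1 FH1 a1(1) a1F mx' c] by blast
      obtain y2 where y2: "y2 \<in> H2" "y2 \<notin> F" "prof F y2 c" using lemC[OF FF H2 FH2 z(1) a2F mx' c] by blast
      have p: "prof F y1 y2" using y1(3) y2(3) unfolding prof_def by simp
      have spF: "span F = F" using FF by simp
      have eqH: "span (insert y F) = H" if H: "subspace H" "dim H = n - 1" "y \<in> H" "y \<notin> F" "F \<subseteq> H" for H y
      proof (rule fd.subspace_dim_equal)
        show "subspace (span (insert y F))" by simp
        show "subspace H" by (rule H(1))
        show "span (insert y F) \<subseteq> H" using H by (intro span_minimal) auto
        have "dim (span (insert y F)) = dim F + 1" using fd.dim_insert[of y F] H(4) spF by simp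
        thus "dim H \<le> dim (span (insert y F))" using H(2) dF by simp
      qed
      have "isometrically_isomorphic scale N (span (insert y1 F)) (span (insert y2 F))"
        by (rule isoD[OF FF y1(2) y2(2) p])
      thus ?thesis using eqH[OF H1 d1 y1(1,2) FH1] eqH[OF H2 d2 y2(1,2) FH2] by simp
    qed
  qed
qed

end
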